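(* Let $k\ge2$, $n=2^k-1$, and let $C$ be the binary simplex $(n,k)$ code. For every correctable erasure pattern with at least one erased node, there exists an erased node that allows for easy repair.
   Context: The binary simplex $(n,k)$ code has generator matrix $G\in\mathbb F_2^{k\times n}$ whose columns $g_1,\dots,g_n$ are all the distinct nonzero vectors of $\mathbb F_2^k$. Nodes are the coordinates $c_1,\dots,c_n$ of codewords $c=uG$. An erasure pattern is a set $S^e\subseteq\{1,\dots,n\}$ of erased nodes; the other nodes are live. The pattern is correctable if no two distinct codewords coincide on all live positions. A node $c_i$ is related to distinct nodes $c_{j_1},\dots,c_{j_\gamma}$ (all different from $c_i$) if $g_i=g_{j_1}+\dots+g_{j_\gamma}$. An erased node allows for easy repair if it is related to $\gamma\le 2$ nodes which are all live. *)

theory Defs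
  imports Main
begin

text \<open>Vectors of F_2^k are modelled as functions nat => bool (True = 1) vanishing
  outside {0..<k}.  Nodes are indexed 0..<n.\<close>

definition vecs :: "nat \<Rightarrow> (nat \<Rightarrow> bool) set" where
  "vecs k = {v. \<forall>t\<ge>k. \<not> v t}"

definition zero_vec :: "nat \<Rightarrow> bool" where
  "zero_vec = (\<lambda>t. False)"

definition vsum :: "(nat \<Rightarrow> nat \<Rightarrow> bool) \<Rightarrow> nat set \<Rightarrow> (nat \<Rightarrow> bool)" where
  "vsum g J = (\<lambda>t. odd (card {j\<in>J. g j t}))"

definition ip :: "nat \<Rightarrow> (nat \<Rightarrow> bool) \<Rightarrow> (nat \<Rightarrow> bool) \<Rightarrow> bool" where
  "ip k u v = odd (card {t\<in>{0..<k}. u t \<and> v t})"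

text \<open>g is a generator matrix (columns g 0, ..., g (n-1)) of the binary simplex (n,k) code:
  its columns are exactly the distinct nonzero vectors of F_2^k.\<close>
definition simplex_gen :: "nat \<Rightarrow> nat \<Rightarrow> (nat \<Rightarrow> nat \<Rightarrow> bool) \<Rightarrow> bool" where
  "simplex_gen k n g \<longleftrightarrow> bij_betw g {0..<n} (vecs k - {zero_vec})"

definition codeword :: "nat \<Rightarrow> nat \<Rightarrow> (nat \<Rightarrow> nat \<Rightarrow> bool) \<Rightarrow> (nat \<Rightarrow> bool) \<Rightarrow> (nat \<Rightarrow> bool)" where
  "codeword k n g u = (\<lambda>i. if i < n then ip k u (g i) else False)"

definition code :: "nat \<Rightarrow> nat \<Rightarrow> (nat \<Rightarrow> nat \<Rightarrow> bool) \<Rightarrow> (nat \<Rightarrow> bool) set" where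
  "code k n g = codeword k n g ` vecs k"

definition correctable :: "nat \<Rightarrow> nat \<Rightarrow> (nat \<Rightarrow> nat \<Rightarrow> bool) \<Rightarrow> nat set \<Rightarrow> bool" where
  "correctable k n g Se \<longleftrightarrow>
     (\<forall>c\<in>code k n g. \<forall>c'\<in>code k n g. c \<noteq> c' \<longrightarrow> (\<exists>i\<in>{0..<n} - Se. c i \<noteq> c' i))"

definition related :: "nat \<Rightarrow> (nat \<Rightarrow> nat \<Rightarrow> bool) \<Rightarrow> nat \<Rightarrow> nat set \<Rightarrow> bool" where
  "related n g i J \<longleftrightarrow> J \<subseteq> {0..<n} \<and> i \<notin> J \<and> g i = vsum g J"

definition easy_repair :: "nat \<Rightarrow> (nat \<Rightarrow> nat \<Rightarrow> bool) \<Rightarrow> nat set \<Rightarrow> nat \<Rightarrow> bool" where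
  "easy_repair n g Se i \<longleftrightarrow>
     i \<in> Se \<and> (\<exists>J. related n g i J \<and> card J \<le> 2 \<and> J \<inter> Se = {})"

end

theory Submission
  imports Defs
begin

definition vxor :: "(nat \<Rightarrow> bool) \<Rightarrow> (nat \<Rightarrow> bool) \<Rightarrow> (nat \<Rightarrow> bool)" where
  "vxor v w = (\<lambda>t. v t \<noteq> w t)"

lemma ip_0[simp]: "\<not> ip 0 u v"
  by (simp add: ip_def)

lemma ip_Suc: "ip (Suc k) u v = (ip k u v \<noteq> (u k \<and> v k))"
proof (cases "u k \<and> v k")
  case True
  have "{t\<in>{0..<Suc k}. u t \<and> v t} = insert k {t\<in>{0..<k}. u t \<and> v t}"
    using True by auto
  then show ?thesis using True by (simp add: ip_def)
next
  case False
  have "{t\<in>{0..<Suc k}. u t \<and> v t} = {t\<in>{0..<k}. u t \<and> v t}"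
    using False by (auto simp: less_Suc_eq)
  then show ?thesis using False by (simp add: ip_def)
qed

lemma ip_cong: "(\<forall>t<k. u t = u' t) \<Longrightarrow> ip k u v = ip k u' v"
  by (induction k) (auto simp: ip_Suc)

lemma ip_xor: "ip k u (vxor v w) = (ip k u v \<noteq> ip k u w)"
  by (induction k) (auto simp: ip_Suc vxor_def)

lemma ip_zero_left: "(\<forall>t<k. \<not> u t) \<Longrightarrow> \<not> ip k u v"
  by (induction k) (auto simp: ip_Suc)

lemma ip_zero_right: "(\<forall>t<k. \<not> v t) \<Longrightarrow> \<not> ip k u v"
  by (induction k) (auto simp: ip_Suc)

lemma ip_unit: "t < k \<Longrightarrow> ip k u (\<lambda>s. s = t) = u t"
  by (induction k) (auto simp: ip_Suc less_Suc_eq ip_zero_right)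

lemma vsum2: assumes "a \<noteq> b" shows "vsum g {a, b} = vxor (g a) (g b)"
proof
  fix t
  have "{j\<in>{a,b}. g j t} = (if g a t then {a} else {}) \<union> (if g b t then {b} else {})"
    by auto
  then show "vsum g {a, b} t = vxor (g a) (g b) t"
    using assms by (simp add: vsum_def vxor_def)
qed

lemma ortho:
  "zero_vec \<in> V \<Longrightarrow> V \<subseteq> vecs k \<Longrightarrow> (\<forall>v\<in>V. \<forall>w\<in>V. vxor v w \<in> V) \<Longrightarrow> V \<noteq> vecs k
   \<Longrightarrow> \<exists>u\<in>vecs k. u \<noteq> zero_vec \<and> (\<forall>v\<in>V. \<not> ip k u v)"
proof (induction k arbitrary: V)
  case 0
  have "vecs 0 = {zero_vec}" by (auto simp: vecs_def zero_vec_def)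
  then show ?case using 0 by auto
next
  case (Suc k)
  define V0 where "V0 = {v\<in>V. \<not> v k}"
  have z0: "zero_vec \<in> V0" using Suc.prems by (simp add: V0_def zero_vec_def)
  have s0: "V0 \<subseteq> vecs k"
  proof
    fix x assume x: "x \<in> V0"
    have "\<not> x t" if "t \<ge> k" for t
    proof (cases "t = k")
      case True then show ?thesis using x by (simp add: V0_def)
    next
      case False
      then have "t \<ge> Suc k" using that by simp
      then show ?thesis using x Suc.prems(2) by (auto simp: V0_def vecs_def)
    qed
    then show "x \<in> vecs k" by (simp add: vecs_def)
  qed
  have c0: "\<forall>v\<in>V0. \<forall>w\<in>V0. vxor v w \<in> V0" using Suc.prems(3)
    by (auto simp: V0_def vxor_def)
  show ?case
  proof (cases "V0 = vecs k")
    case False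
    then obtain u where u: "u \<in> vecs k" "u \<noteq> zero_vec" "\<forall>v\<in>V0. \<not> ip k u v"
      using Suc.IH[OF z0 s0 c0] by blast
    obtain t where t: "u t" using u(2) by (auto simp: zero_vec_def)
    have tk: "t < k" using u(1) t by (auto simp: vecs_def not_less[symmetric])
    show ?thesis
    proof (cases "\<exists>w\<in>V. w k")
      case True
      then obtain w where w: "w \<in> V" "w k" by blast
      define u' where "u' = u(k := ip k u w)"
      have "u' \<in> vecs (Suc k)" using u(1) by (auto simp: u'_def vecs_def)
      moreover have "u' \<noteq> zero_vec" using t tk
        by (auto simp: u'_def zero_vec_def fun_eq_iff)
      moreover have "\<forall>v\<in>V. \<not> ip (Suc k) u' v"
      proof
        fix v assume v: "v \<in> V"
        have e: "ip k u' v = ip k u v" by (rule ip_cong) (simp add: u'_def)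
        show "\<not> ip (Suc k) u' v"
        proof (cases "v k")
          case False
          then show ?thesis using v u(3) e by (auto simp: ip_Suc V0_def)
        next
          case True
          have "vxor v w \<in> V0" using Suc.prems(3) v w True
            by (auto simp: V0_def vxor_def)
          then have "\<not> ip k u (vxor v w)" using u(3) by blast
          then show ?thesis using e True by (auto simp: ip_Suc ip_xor u'_def)
        qed
      qed
      ultimately show ?thesis by blast
    next
      case False
      have "u \<in> vecs (Suc k)" using u(1) by (auto simp: vecs_def)
      moreover have "\<forall>v\<in>V. \<not> ip (Suc k) u v"
        using False u(3) by (auto simp: ip_Suc V0_def)
      ultimately show ?thesis using u(2) by blast
    qed
  next
    case True
    have nw: "\<forall>w\<in>V. \<not> w k"
    proof (rule ccontr)
      assume "\<not> (\<forall>w\<in>V. \<not> w k)"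
      then obtain w where w: "w \<in> V" "w k" by blast
      have "vecs (Suc k) \<subseteq> V"
      proof
        fix x assume x: "x \<in> vecs (Suc k)"
        show "x \<in> V"
        proof (cases "x k")
          case False
          have "\<not> x t" if "t \<ge> k" for t
          proof (cases "t = k")
            case True then show ?thesis using False by simp
          next
            case False
            then have "t \<ge> Suc k" using that by simp
            then show ?thesis using x by (auto simp: vecs_def)
          qed
          then have "x \<in> vecs k" by (simp add: vecs_def)
          then show ?thesis using True by (auto simp: V0_def)
        next
          case xk: True
          have "w \<in> vecs (Suc k)" using w Suc.prems(2) by auto
          then have wv: "\<forall>t\<ge>Suc k. \<not> w t" by (simp add: vecs_def)
          have xv: "\<forall>t\<ge>Suc k. \<not> x t" using x by (simp add: vecs_def)
          have "\<not> vxor x w t" if "t \<ge> k" for t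
          proof (cases "t = k")
            case True
            have "x t" "w t" using xk w(2) True by simp_all
            then show ?thesis unfolding vxor_def by simp
          next
            case False
            then have st: "t \<ge> Suc k" using that by simp
            have "\<not> x t" "\<not> w t" using xv wv st by blast+
            then show ?thesis unfolding vxor_def by simp
          qed
          then have "vxor x w \<in> vecs k" by (simp add: vecs_def)
          then have "vxor x w \<in> V" using True by (auto simp: V0_def)
          then have "vxor (vxor x w) w \<in> V" using Suc.prems(3) w by blast
          moreover have "vxor (vxor x w) w = x" by (auto simp: vxor_def)
          ultimately show ?thesis by simp
        qed
      qed
      then show False using Suc.prems(2,4) by blast
    qed
    have "(\<lambda>s. s = k) \<in> vecs (Suc k)" by (auto simp: vecs_def)
    moreover have "(\<lambda>s. s = k) \<noteq> zero_vec" by (auto simp: zero_vec_def fun_eq_iff)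
    moreover have "\<forall>v\<in>V. \<not> ip (Suc k) (\<lambda>s. s = k) v"
      using nw by (auto simp: ip_Suc ip_zero_left)
    ultimately show ?thesis by blast
  qed
qed

theorem lemma3p3:
  fixes k n :: nat and g :: "nat \<Rightarrow> nat \<Rightarrow> bool" and Se :: "nat set"
  assumes "k \<ge> 2" and "n = 2 ^ k - 1" and "simplex_gen k n g"
    and "Se \<subseteq> {0..<n}" and "Se \<noteq> {}" and "correctable k n g Se"
  shows "\<exists>i\<in>Se. easy_repair n g Se i"
proof (rule ccontr)
  assume nope: "\<not> (\<exists>i\<in>Se. easy_repair n g Se i)"
  have bij: "bij_betw g {0..<n} (vecs k - {zero_vec})"
    using assms(3) by (simp add: simplex_gen_def)
  have inj: "inj_on g {0..<n}" using bij by (simp add: bij_betw_def)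
  have img: "g ` {0..<n} = vecs k - {zero_vec}" using bij by (simp add: bij_betw_def)
  define V where "V = insert zero_vec (g ` ({0..<n} - Se))"
  have z: "zero_vec \<in> V" by (simp add: V_def)
  have sub: "V \<subseteq> vecs k" using img by (auto simp: V_def vecs_def zero_vec_def)
  have clos: "\<forall>v\<in>V. \<forall>w\<in>V. vxor v w \<in> V"
  proof (intro ballI)
    fix v w assume v: "v \<in> V" and w: "w \<in> V"
    show "vxor v w \<in> V"
    proof (cases "v = zero_vec \<or> w = zero_vec \<or> v = w")
      case True
      have a: "vxor zero_vec x = x" "vxor x zero_vec = x" "vxor x x = zero_vec" for x
        by (auto simp: vxor_def zero_vec_def)
      show ?thesis using True a v w z by auto
    next
      case False
      then obtain a b where ab: "a \<in> {0..<n} - Se" "b \<in> {0..<n} - Se" "v = g a" "w = g b"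
        using v w by (auto simp: V_def)
      have anb: "a \<noteq> b" using False ab by auto
      have "g a \<in> vecs k" "g b \<in> vecs k" using ab(1,2) img by blast+
      then have "vxor v w \<in> vecs k" using ab by (auto simp: vecs_def vxor_def)
      moreover have "vxor v w \<noteq> zero_vec" using False
        by (auto simp: vxor_def zero_vec_def fun_eq_iff)
      ultimately have "vxor v w \<in> g ` {0..<n}" using img by simp
      then obtain e where e: "e \<in> {0..<n}" "g e = vxor v w" by (auto simp del: atLeastLessThan_iff)
      show ?thesis
      proof (cases "e \<in> Se")
        case False
        then have "g e \<in> g ` ({0..<n} - Se)" using e(1) by blast
        then have "vxor v w \<in> g ` ({0..<n} - Se)" using e(2) by simp
        then show ?thesis unfolding V_def by (rule insertI2)
      next
        case True
        have vs: "vsum g {a, b} = vxor (g a) (g b)" using anb by (rule vsum2)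
        have "related n g e {a, b}"
          using ab True e vs by (auto simp: related_def)
        moreover have "card {a, b} \<le> 2" by (simp add: card_insert_if)
        moreover have "{a, b} \<inter> Se = {}" using ab by auto
        ultimately have "easy_repair n g Se e" using True by (auto simp: easy_repair_def)
        then show ?thesis using nope True by blast
      qed
    qed
  qed
  obtain i where i: "i \<in> Se" using assms(5) by blast
  have in0: "i \<in> {0..<n}" using i assms(4) by auto
  have "g i \<notin> V"
  proof
    assume "g i \<in> V"
    moreover have "g i \<noteq> zero_vec"
    proof -
      have "g i \<in> g ` {0..<n}" using in0 by blast
      then show ?thesis using img by simp
    qed
    ultimately obtain j where "j \<in> {0..<n} - Se" "g i = g j" by (auto simp: V_def)
    moreover then have "i = j" using inj in0 by (auto dest: inj_onD)
    ultimately show False using i by simp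
  qed
  moreover have "g i \<in> vecs k"
  proof -
    have "g i \<in> g ` {0..<n}" using in0 by blast
    then show ?thesis using img by simp
  qed
  ultimately have ne: "V \<noteq> vecs k" by blast
  obtain u where u: "u \<in> vecs k" "u \<noteq> zero_vec" "\<forall>v\<in>V. \<not> ip k u v"
    using ortho[OF z sub clos ne] by blast
  obtain t where t: "u t" using u(2) by (auto simp: zero_vec_def)
  have tk: "t < k" using u(1) t by (auto simp: vecs_def not_less[symmetric])
  have "(\<lambda>s. s = t) \<in> vecs k - {zero_vec}" using tk
    by (auto simp: vecs_def zero_vec_def fun_eq_iff)
  then have "(\<lambda>s. s = t) \<in> g ` {0..<n}" using img by simp
  then obtain i0 where i0: "i0 \<in> {0..<n}" "g i0 = (\<lambda>s. s = t)" by (auto simp del: atLeastLessThan_iff)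
  have zc: "codeword k n g zero_vec = (\<lambda>i. False)"
    by (auto simp: codeword_def ip_zero_left zero_vec_def)
  have zv: "zero_vec \<in> vecs k" by (simp add: vecs_def zero_vec_def)
  have c1: "codeword k n g u \<in> code k n g" using u(1) by (simp add: code_def)
  have c2: "codeword k n g zero_vec \<in> code k n g" using zv by (simp add: code_def)
  have "codeword k n g u i0" using i0 tk t by (simp add: codeword_def ip_unit)
  then have "codeword k n g u \<noteq> codeword k n g zero_vec" using zc by auto
  then obtain l where l: "l \<in> {0..<n} - Se" "codeword k n g u l \<noteq> codeword k n g zero_vec l"
    using assms(6) c1 c2 unfolding correctable_def by blast
  have "\<not> ip k zero_vec (g l)" by (simp add: ip_zero_left zero_vec_def)
  then have "ip k u (g l)" using l by (auto simp: codeword_def)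
  moreover have "g l \<in> V" using l by (auto simp: V_def)
  ultimately show False using u(3) by blast
qed

end
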